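(* Let $M$ be an $n\times n$ ($n\geq 2$) primitive Boolean matrix with Boolean rank $b(M)=b$. Then $$k(M)\leq \left\lceil\frac{(b-1)^2+1}{2}\right\rceil +1.$$
   Context: Boolean matrices are $(0,1)$-matrices with Boolean arithmetic ($1+1=1$). A square Boolean matrix $M$ is primitive if some power $M^r$ has all entries equal to $1$. The scrambling index $k(M)$ of a primitive matrix $M$ is the smallest positive integer $k$ such that any two rows of $M^k$ have a $1$ in a common position; equivalently, the smallest $k$ with $M^k(M^t)^k=J$ (the all-ones matrix). The Boolean rank $b(M)$ of an $m\times n$ nonzero Boolean matrix $M$ is the smallest positive integer $b$ such that $M=AB$ for some $m\times b$ Boolean matrix $A$ and $b\times n$ Boolean matrix $B$ (Boolean product). *)

theory Defs
  imports Complex_Main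
begin

text \<open>Boolean matrices are represented as functions nat => nat => bool; an m x n matrix
  is such a function of which only entries with row index < m and column index < n matter.\<close>

definition bmult :: "nat \<Rightarrow> (nat \<Rightarrow> nat \<Rightarrow> bool) \<Rightarrow> (nat \<Rightarrow> nat \<Rightarrow> bool) \<Rightarrow> (nat \<Rightarrow> nat \<Rightarrow> bool)" where
  "bmult p A B = (\<lambda>i j. \<exists>l<p. A i l \<and> B l j)"

fun bpow :: "nat \<Rightarrow> (nat \<Rightarrow> nat \<Rightarrow> bool) \<Rightarrow> nat \<Rightarrow> (nat \<Rightarrow> nat \<Rightarrow> bool)" where
  "bpow n M 0 = (\<lambda>i j. i = j)"
| "bpow n M (Suc k) = bmult n (bpow n M k) M"

definition primitive :: "nat \<Rightarrow> (nat \<Rightarrow> nat \<Rightarrow> bool) \<Rightarrow> bool" where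
  "primitive n M = (\<exists>r>0. \<forall>i<n. \<forall>j<n. bpow n M r i j)"

definition scrambling_index :: "nat \<Rightarrow> (nat \<Rightarrow> nat \<Rightarrow> bool) \<Rightarrow> nat" where
  "scrambling_index n M =
     (LEAST k. k > 0 \<and> (\<forall>i<n. \<forall>j<n. \<exists>l<n. bpow n M k i l \<and> bpow n M k j l))"

definition boolean_rank :: "nat \<Rightarrow> nat \<Rightarrow> (nat \<Rightarrow> nat \<Rightarrow> bool) \<Rightarrow> nat" where
  "boolean_rank m n M =
     (LEAST b. b > 0 \<and> (\<exists>A B. \<forall>i<m. \<forall>j<n. M i j = bmult b A B i j))"

end

theory Submission
  imports Defs
begin


lemma bpow_add:
  assumes "z < m"
  shows "bpow m N (a + b) x z = (\<exists>y<m. bpow m N a x y \<and> bpow m N b y z)"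
  using assms
proof (induction b arbitrary: z)
  case 0
  then show ?case by auto
next
  case (Suc b)
  have "bpow m N (a + Suc b) x z = (\<exists>l<m. bpow m N (a + b) x l \<and> N l z)"
    by (simp add: bmult_def)
  also have "\<dots> = (\<exists>l<m. (\<exists>y<m. bpow m N a x y \<and> bpow m N b y l) \<and> N l z)"
    using Suc.IH by auto
  also have "\<dots> = (\<exists>y<m. bpow m N a x y \<and> bpow m N (Suc b) y z)"
    by (auto simp: bmult_def)
  finally show ?case .
qed

lemma bpow_one: "x < m \<Longrightarrow> bpow m N 1 x y = N x y"
  by (auto simp: bmult_def)

locale prim =
  fixes m :: nat and N :: "nat \<Rightarrow> nat \<Rightarrow> bool"
  assumes m_pos: "m \<ge> 1"
    and prim: "\<exists>r>0. \<forall>x<m. \<forall>y<m. bpow m N r x y"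
begin

abbreviation W where "W k x y \<equiv> bpow m N k x y"

definition r0 where "r0 = (SOME r. r > 0 \<and> (\<forall>x<m. \<forall>y<m. W r x y))"

lemma r0: "r0 > 0" "\<And>x y. x < m \<Longrightarrow> y < m \<Longrightarrow> W r0 x y"
proof -
  have "r0 > 0 \<and> (\<forall>x<m. \<forall>y<m. W r0 x y)"
    unfolding r0_def by (rule someI_ex) (use prim in blast)
  then show "r0 > 0" "\<And>x y. x < m \<Longrightarrow> y < m \<Longrightarrow> W r0 x y" by auto
qed

lemma row_nz: "x < m \<Longrightarrow> \<exists>y<m. N x y"
proof -
  assume x: "x < m"
  have "W (1 + (r0 - 1)) x x" using r0 x by simp
  then obtain y where "y < m" "W 1 x y" using bpow_add[OF x, of N 1 "r0 - 1" x] by auto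
  then show ?thesis using bpow_one[OF x] by auto
qed

lemma walk_ex: "x < m \<Longrightarrow> \<exists>y<m. W k x y"
proof (induction k)
  case 0 then show ?case by auto
next
  case (Suc k)
  then obtain y where y: "y < m" "W k x y" by auto
  then obtain z where "z < m" "N y z" using row_nz by auto
  then show ?case using y by (auto simp: bmult_def)
qed

lemma full: "k \<ge> r0 \<Longrightarrow> x < m \<Longrightarrow> y < m \<Longrightarrow> W k x y"
proof -
  assume k: "k \<ge> r0" and x: "x < m" and y: "y < m"
  obtain z where z: "z < m" "W (k - r0) x z" using walk_ex x by blast
  have "W ((k - r0) + r0) x y" using bpow_add[OF y] z r0(2)[OF z(1) y] by blast
  then show ?thesis using k by simp
qed

definition S where "S k x = {y. y < m \<and> W k x y}"
definition img where "img k Z = {y. y < m \<and> (\<exists>x\<in>Z. W k x y)}"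

lemma S_sub: "S k x \<subseteq> {..<m}" by (auto simp: S_def)
lemma img_sub: "img k Z \<subseteq> {..<m}" by (auto simp: img_def)
lemma S_fin: "finite (S k x)" by (rule finite_subset[OF S_sub]) auto
lemma img_fin: "finite (img k Z)" by (rule finite_subset[OF img_sub]) auto

lemma S_add: "S (j + k) x = img k (S j x)"
  by (auto simp: S_def img_def bpow_add)

lemma img_add: "Z \<subseteq> {..<m} \<Longrightarrow> img k (img l Z) = img (l + k) Z"
proof
  assume Z: "Z \<subseteq> {..<m}"
  show "img k (img l Z) \<subseteq> img (l + k) Z"
    unfolding img_def using bpow_add by fastforce
  show "img (l + k) Z \<subseteq> img k (img l Z)"
  proof
    fix y assume "y \<in> img (l + k) Z"
    then obtain x where x: "x \<in> Z" "y < m" "W (l + k) x y" by (auto simp: img_def)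
    then obtain z where "z < m" "W l x z" "W k z y" using bpow_add[OF x(2)] by blast
    then show "y \<in> img k (img l Z)" using x by (auto simp: img_def)
  qed
qed

lemma img_full: "Z \<subseteq> {..<m} \<Longrightarrow> Z \<noteq> {} \<Longrightarrow> k \<ge> r0 \<Longrightarrow> img k Z = {..<m}"
  using full by (auto simp: img_def) (meson lessThan_iff subsetD)

lemma S_full: "x < m \<Longrightarrow> k \<ge> r0 \<Longrightarrow> S k x = {..<m}"
  using full by (auto simp: S_def)

lemma S_shift: "x < m \<Longrightarrow> W d x x' \<Longrightarrow> x' < m \<Longrightarrow> S k x' \<subseteq> S (d + k) x"
  by (auto simp: S_def bpow_add)

end


context prim begin

lemma walk_seq:
  "x < m \<Longrightarrow> y < m \<Longrightarrow> W k x y \<Longrightarrow>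
   \<exists>p. p 0 = x \<and> p k = y \<and> (\<forall>i\<le>k. p i < m) \<and> (\<forall>i<k. N (p i) (p (Suc i)))"
proof (induction k arbitrary: y)
  case 0 then show ?case by (intro exI[of _ "\<lambda>_. x"]) auto
next
  case (Suc k)
  then obtain l where l: "l < m" "W k x l" "N l y" by (auto simp: bmult_def)
  then obtain p where p: "p 0 = x" "p k = l" "\<forall>i\<le>k. p i < m" "\<forall>i<k. N (p i) (p (Suc i))"
    using Suc.IH[OF Suc.prems(1) l(1)] by blast
  show ?case
    apply (rule exI[of _ "p(Suc k := y)"])
    using p l Suc.prems by (auto simp: le_Suc_eq less_Suc_eq)
qed

lemma seq_walk:
  assumes "\<forall>i\<le>k. p i < m" "\<forall>i<k. N (p i) (p (Suc i))" "i \<le> j" "j \<le> k"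
  shows "W (j - i) (p i) (p j)"
  using assms(3,4)
proof (induction j)
  case 0 then show ?case by simp
next
  case (Suc j)
  show ?case
  proof (cases "i = Suc j")
    case True then show ?thesis by simp
  next
    case False
    then have "i \<le> j" using Suc by simp
    then have "W (j - i) (p i) (p j)" using Suc by simp
    moreover have "Suc j - i = Suc (j - i)" using \<open>i \<le> j\<close> by simp
    moreover have "p j < m" "N (p j) (p (Suc j))" using assms(1,2) Suc.prems by auto
    ultimately show ?thesis by (auto simp: bmult_def)
  qed
qed

definition s0 where "s0 = (LEAST s. s > 0 \<and> (\<exists>x<m. W s x x))"

lemma s0_ex: "s0 > 0 \<and> (\<exists>x<m. W s0 x x)"
proof -
  have "r0 > 0 \<and> (\<exists>x<m. W r0 x x)" using r0 m_pos by (intro conjI exI[of _ 0]) auto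
  then show ?thesis unfolding s0_def by (rule LeastI)
qed

lemma s0_min: "0 < d \<Longrightarrow> d < s0 \<Longrightarrow> x < m \<Longrightarrow> \<not> W d x x"
  using not_less_Least[of d "\<lambda>s. s > 0 \<and> (\<exists>x<m. W s x x)"] unfolding s0_def[symmetric] by auto

definition p0 where "p0 = (SOME p. \<exists>x<m. p 0 = x \<and> p s0 = x \<and> (\<forall>i\<le>s0. p i < m) \<and> (\<forall>i<s0. N (p i) (p (Suc i))))"

lemma p0: "p0 0 = p0 s0" "\<forall>i\<le>s0. p0 i < m" "\<forall>i<s0. N (p0 i) (p0 (Suc i))"
proof -
  obtain x where x: "x < m" "W s0 x x" using s0_ex by auto
  have "\<exists>p. \<exists>x<m. p 0 = x \<and> p s0 = x \<and> (\<forall>i\<le>s0. p i < m) \<and> (\<forall>i<s0. N (p i) (p (Suc i)))"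
    using walk_seq[OF x(1) x(1) x(2)] x(1) by blast
  then have "\<exists>x<m. p0 0 = x \<and> p0 s0 = x \<and> (\<forall>i\<le>s0. p0 i < m) \<and> (\<forall>i<s0. N (p0 i) (p0 (Suc i)))"
    unfolding p0_def by (rule someI_ex)
  then show "p0 0 = p0 s0" "\<forall>i\<le>s0. p0 i < m" "\<forall>i<s0. N (p0 i) (p0 (Suc i))" by auto
qed

definition c where "c i = p0 (i mod s0)"

lemma s0_pos: "s0 > 0" using s0_ex by auto

lemma c_lt: "c i < m"
  using p0(2) s0_pos by (simp add: c_def)

lemma c_edge: "N (c i) (c (Suc i))"
proof (cases "Suc (i mod s0) < s0")
  case True
  then have "Suc i mod s0 = Suc (i mod s0)" by (metis mod_Suc Suc_lessD less_not_refl)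
  then show ?thesis using p0(3) True by (simp add: c_def)
next
  case False
  then have e: "Suc (i mod s0) = s0" using s0_pos by (meson Suc_lessI mod_less_divisor)
  then have "Suc i mod s0 = 0" by (metis mod_Suc)
  then show ?thesis using p0 e by (simp add: c_def) (metis lessI)
qed

lemma c_per: "c (i + s0) = c i" by (simp add: c_def)

lemma c_walk: "W d (c i) (c (i + d))"
proof (induction d)
  case 0 then show ?case by simp
next
  case (Suc d)
  then show ?case using c_lt c_edge[of "i + d"] by (auto simp: bmult_def)
qed

lemma c_mod: "c (i mod s0) = c i" by (simp add: c_def)

lemma c_closed: "W s0 (c i) (c i)"
  using c_walk[of s0 i] by (simp add: c_per)

lemma c_inj: "inj_on c {..<s0}"
proof (rule inj_onI)
  fix i j assume i: "i \<in> {..<s0}" and j: "j \<in> {..<s0}" and e: "c i = c j"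
  have pe: "p0 i = p0 j" using i j e by (simp add: c_def)
  show "i = j"
  proof (rule ccontr)
    assume "i \<noteq> j"
    then consider "i < j" | "j < i" by linarith
    then show False
    proof cases
      case 1
      have "W (j - i) (p0 i) (p0 j)" using seq_walk[OF p0(2,3)] 1 j by simp
      moreover have "p0 i < m" using p0(2) 1 j by auto
      moreover have "0 < j - i" "j - i < s0" using 1 j by auto
      ultimately show False using s0_min[of "j - i" "p0 i"] pe by auto
    next
      case 2
      have "W (i - j) (p0 j) (p0 i)" using seq_walk[OF p0(2,3)] 2 i by simp
      moreover have "p0 j < m" using p0(2) 2 i by auto
      moreover have "0 < i - j" "i - j < s0" using 2 i by auto
      ultimately show False using s0_min[of "i - j" "p0 j"] pe by auto
    qed
  qed
qed

definition Cset where "Cset = c ` {..<s0}"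

lemma card_C: "card Cset = s0"
  unfolding Cset_def using c_inj by (simp add: card_image)

lemma C_sub: "Cset \<subseteq> {..<m}" using c_lt by (auto simp: Cset_def)

lemma s0_le: "s0 \<le> m"
  using card_mono[OF _ C_sub] card_C by simp

end


context prim begin

lemma W_Suc: "W k x z \<Longrightarrow> z < m \<Longrightarrow> N z y \<Longrightarrow> W (Suc k) x y"
  by (auto simp: bmult_def)

lemma s0_lt: assumes m2: "m \<ge> 2" shows "s0 < m"
proof (rule ccontr)
  assume "\<not> s0 < m"
  then have sm: "s0 = m" using s0_le by simp
  have CV: "Cset = {..<m}"
    using card_C sm C_sub by (metis card_lessThan card_subset_eq finite_lessThan)
  have succ: "y = c (Suc i)" if y: "y < m" "N (c i) y" for i y
  proof -
    obtain j where j: "j < s0" "y = c j" using y CV unfolding Cset_def by auto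
    define i' where "i' = i mod s0"
    have i': "i' < s0" "c i' = c i" "c (Suc i') = c (Suc i)"
      using s0_pos by (auto simp: i'_def c_mod) (metis c_mod mod_Suc_eq)
    show ?thesis
    proof (cases "j \<le> i'")
      case True
      have "W (i' - j) (c j) (c i')" using c_walk[of "i' - j" j] True by simp
      then have w: "W (Suc (i' - j)) (c j) (c j)" using W_Suc c_lt y i' j by metis
      have "\<not> Suc (i' - j) < s0" using s0_min[OF _ _ c_lt] w by blast
      then have "j = 0" "i' = s0 - 1" using True i' by auto
      then have "c (Suc i') = c 0" using c_per[of 0] s0_pos by simp
      then show ?thesis using i' j \<open>j = 0\<close> by simp
    next
      case False
      have "W (i' + s0 - j) (c j) (c i')" using c_walk[of "i' + s0 - j" j] False c_per[of i'] j
        by (simp add: add.commute)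
      then have w: "W (Suc (i' + s0 - j)) (c j) (c j)" using W_Suc c_lt y i' j by metis
      have "\<not> Suc (i' + s0 - j) < s0" using s0_min[OF _ _ c_lt] w by blast
      then have "j = Suc i'" using False j by auto
      then show ?thesis using i' j by simp
    qed
  qed
  have only: "y < m \<Longrightarrow> W k (c 0) y \<Longrightarrow> y = c k" for k y
  proof (induction k arbitrary: y)
    case 0 then show ?case by simp
  next
    case (Suc k)
    then obtain l where "l < m" "W k (c 0) l" "N l y" by (auto simp: bmult_def)
    then show ?case using Suc.IH succ Suc.prems by auto
  qed
  have "0 = c r0" "1 = c r0" using only full[of r0 "c 0"] c_lt m2 by auto
  then show False by simp
qed

definition B where "B j = {x. x < m \<and> (\<exists>i. W j x (c i))}"

lemma B_mono: "B j \<subseteq> B (Suc j)"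
  unfolding B_def using W_Suc c_lt c_edge by blast

lemma B_Suc: "B (Suc j) = {x. x < m \<and> (\<exists>y<m. N x y \<and> y \<in> B j)}"
proof -
  have "W (Suc j) x (c i) = (\<exists>y<m. N x y \<and> W j y (c i))" if x: "x < m" for x i
  proof -
    have "W (1 + j) x (c i) = (\<exists>y<m. W 1 x y \<and> W j y (c i))" by (rule bpow_add[OF c_lt])
    then show ?thesis by (simp only: plus_1_eq_Suc bpow_one[OF x])
  qed
  then show ?thesis unfolding B_def by (auto simp del: bpow.simps) blast+
qed

lemma B_const: "B (Suc j) = B j \<Longrightarrow> B (j + q) = B j"
proof (induction q)
  case 0 then show ?case by simp
next
  case (Suc q)
  then have "B (Suc (j + q)) = B (Suc j)" by (simp add: B_Suc)
  then show ?case using Suc by simp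
qed

lemma B_card: "min m (s0 + j) \<le> card (B j)"
proof (induction j)
  case 0
  have "Cset \<subseteq> B 0" unfolding Cset_def B_def using c_lt by auto
  then have "s0 \<le> card (B 0)" using card_C card_mono[of "B 0" Cset]
    by (metis B_def finite_Collect_conjI finite_Collect_less_nat)
  then show ?case by simp
next
  case (Suc j)
  have fin: "finite (B j)" "finite (B (Suc j))" by (auto simp: B_def)
  show ?case
  proof (cases "B (Suc j) = B j")
    case True
    then have "B (j + r0) = B j" by (rule B_const)
    moreover have "B (j + r0) = {..<m}" using full[of "j + r0" _ "c 0"] c_lt unfolding B_def by auto
    ultimately have "B j = {..<m}" using True by simp
    then show ?thesis using True by simp
  next
    case False
    then have "B j \<subset> B (Suc j)" using B_mono by auto
    then have "card (B j) < card (B (Suc j))" using fin psubset_card_mono by blast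
    then show ?thesis using Suc by simp
  qed
qed

lemma phase1: "u < m \<Longrightarrow> s0 \<le> m \<Longrightarrow> \<exists>i. W (m - s0) u (c i)"
proof -
  assume u: "u < m" and sm: "s0 \<le> m"
  have "m \<le> card (B (m - s0))" using B_card[of "m - s0"] sm by simp
  moreover have "B (m - s0) \<subseteq> {..<m}" by (auto simp: B_def)
  ultimately have "B (m - s0) = {..<m}"
    by (metis card_lessThan card_seteq finite_lessThan)
  then show ?thesis using u unfolding B_def by auto
qed

end


context prim begin

lemma img_iter: "Z \<subseteq> {..<m} \<Longrightarrow> img d Z = Z \<Longrightarrow> img (q * d) Z = Z"
proof (induction q)
  case 0 then show ?case by (auto simp: img_def)
next
  case (Suc q)
  have "img (q * d + d) Z = img d (img (q * d) Z)" using img_add[OF Suc.prems(1)] by simp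
  then show ?case using Suc by (simp add: add.commute)
qed

lemma growth: "t + 1 \<le> m \<Longrightarrow> t + 1 \<le> card (S (t * s0) (c i))"
proof (induction t)
  case 0
  have "S 0 (c i) = {c i}" using c_lt by (auto simp: S_def)
  then show ?case by simp
next
  case (Suc t)
  let ?Z = "S (t * s0) (c i)"
  have sub: "?Z \<subseteq> S (Suc t * s0) (c i)"
  proof -
    have "S (t*s0) (c i) \<subseteq> S (s0 + t*s0) (c i)" by (rule S_shift[OF c_lt c_closed c_lt])
    then show ?thesis by (simp add: add.commute)
  qed
  have step: "S (Suc t * s0) (c i) = img s0 ?Z"
    using S_add[of "t * s0" s0 "c i"] by (simp add: add.commute)
  show ?case
  proof (cases "?Z = S (Suc t * s0) (c i)")
    case True
    then have "img s0 ?Z = ?Z" using step by simp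
    then have "img (r0 * s0) ?Z = ?Z" using img_iter S_sub by blast
    moreover have "?Z \<noteq> {}" using Suc by auto
    then have "img (r0 * s0) ?Z = {..<m}"
      using img_full[OF S_sub] s0_pos by simp
    ultimately have "S (Suc t * s0) (c i) = {..<m}" using True by simp
    then show ?thesis using Suc.prems by simp
  next
    case False
    then have "card ?Z < card (S (Suc t * s0) (c i))"
      using sub by (intro psubset_card_mono S_fin) auto
    then show ?thesis using Suc by simp
  qed
qed

lemma core:
  assumes abe: "a < m" "b < m" "e < m" and d: "d > 0"
    and wab: "W d a b" and wbe: "W d b e"
    and dis: "S T a \<inter> S T b = {}"
    and ca: "t + 1 \<le> card (S T a)" and cb: "t + 1 \<le> card (S T b)" and ce: "t + 1 \<le> card (S T e)"
    and m2: "m = 2 * (t + 1)"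
  shows "\<exists>w<m. W (T + d) a w \<and> W (T + d) b w"
proof (rule ccontr)
  assume nm: "\<not> ?thesis"
  let ?X = "S T a" and ?Y = "S T b" and ?Xd = "S (T + d) a" and ?Yd = "S (T + d) b"
  have dd: "?Xd \<inter> ?Yd = {}" using nm by (auto simp: S_def)
  have YX: "?Y \<subseteq> ?Xd" using S_shift[OF abe(1) wab abe(2), where k=T] by (simp add: add.commute)
  have EY: "S T e \<subseteq> ?Yd" using S_shift[OF abe(2) wbe abe(3), where k=T] by (simp add: add.commute)
  have cYd: "t + 1 \<le> card ?Yd" using card_mono[OF S_fin EY] ce by simp
  have V: "card {..<m} = m" by simp
  have "card (?Xd \<union> ?Yd) = card ?Xd + card ?Yd" using dd S_fin by (simp add: card_Un_disjoint)
  moreover have "card (?Xd \<union> ?Yd) \<le> m"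
    using card_mono[of "{..<m}" "?Xd \<union> ?Yd"] S_sub by auto
  ultimately have "card ?Xd \<le> t + 1" using cYd m2 by simp
  then have "card ?Xd \<le> card ?Y" using cb by simp
  then have XdY: "?Xd = ?Y" using YX card_seteq[OF S_fin] by blast
  have "card (?X \<union> ?Y) = card ?X + card ?Y" using dis S_fin by (simp add: card_Un_disjoint)
  moreover have "?X \<union> ?Y \<subseteq> {..<m}" using S_sub by auto
  ultimately have cXY: "card (?X \<union> ?Y) = m" using ca cb m2 card_mono[of "{..<m}" "?X \<union> ?Y"] by simp
  have XY: "?X \<union> ?Y = {..<m}"
    using card_seteq[of "{..<m}" "?X \<union> ?Y"] \<open>?X \<union> ?Y \<subseteq> {..<m}\<close> cXY by simp
  have "?Yd \<subseteq> ?X" using dd XdY XY S_sub[of "T + d" b] by blast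
  moreover have "card ?X \<le> t + 1"
    using cXY dis cb m2 card_Un_disjoint[OF S_fin S_fin dis] by simp
  ultimately have YdX: "?Yd = ?X" using cYd card_seteq[OF S_fin] by (meson le_trans)
  have i1: "img d ?X = ?Y" using S_add[of T d a] XdY by simp
  have i2: "img d ?Y = ?X" using S_add[of T d b] YdX by simp
  have "img (d + d) ?X = img d (img d ?X)" using img_add[OF S_sub] by metis
  then have "img (d + d) ?X = ?X" using i1 i2 by simp
  then have "img (r0 * (d + d)) ?X = ?X" using img_iter S_sub by blast
  moreover have "?X \<noteq> {}" using ca by auto
  then have "img (r0 * (d + d)) ?X = {..<m}"
    using d by (intro img_full[OF S_sub]) auto
  ultimately have "?X = {..<m}" by simp
  then have "?Y = {}" using dis S_sub by blast
  then show False using cb by simp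
qed

end


context prim begin

lemma meet_ext:
  assumes "w < m" "W T x w" "W T y w" "T \<le> K"
  shows "\<exists>w'<m. W K x w' \<and> W K y w'"
proof -
  obtain w' where w': "w' < m" "W (K - T) w w'" using walk_ex assms(1) by blast
  have "W (T + (K - T)) x w'" "W (T + (K - T)) y w'"
    using bpow_add[OF w'(1)] assms w' by blast+
  then show ?thesis using assms(4) w'(1) by auto
qed

definition tt where "tt = (m - 1) div 2"
definition KK where "KK = tt * s0 + (if odd m then 0 else s0 div 2)"

lemma meet_idx:
  assumes ij: "i < j" "j < s0"
  shows "\<exists>w<m. W KK (c i) w \<and> W KK (c j) w"
proof -
  let ?T = "tt * s0"
  let ?X = "S ?T (c i)" and ?Y = "S ?T (c j)"
  have tm: "tt + 1 \<le> m" using m_pos by (simp add: tt_def)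
  have cX: "tt + 1 \<le> card ?X" and cY: "tt + 1 \<le> card ?Y" using growth[OF tm] by auto
  show ?thesis
  proof (cases "?X \<inter> ?Y = {}")
    case False
    then obtain w where "w \<in> ?X" "w \<in> ?Y" by blast
    then have "w < m" "W ?T (c i) w" "W ?T (c j) w" by (auto simp: S_def)
    then show ?thesis using meet_ext[of w ?T "c i" "c j" KK] by (simp add: KK_def)
  next
    case True
    have "card (?X \<union> ?Y) = card ?X + card ?Y" using True S_fin by (simp add: card_Un_disjoint)
    moreover have "card (?X \<union> ?Y) \<le> m"
      using card_mono[of "{..<m}" "?X \<union> ?Y"] S_sub by auto
    ultimately have le: "2 * (tt + 1) \<le> m" using cX cY by simp
    then have ev: "\<not> odd m" and m2: "m = 2 * (tt + 1)" unfolding tt_def by presburger+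
    have K: "KK = tt * s0 + s0 div 2" using ev by (simp add: KK_def)
    define d where "d = j - i"
    have d: "d > 0" "i + d = j" "d < s0" using ij by (auto simp: d_def)
    have m1: "\<exists>w<m. W (?T + d) (c i) w \<and> W (?T + d) (c j) w"
    proof (rule core[OF c_lt c_lt c_lt d(1) _ _ True cX cY _ m2])
      show "W d (c i) (c j)" using c_walk[of d i] d by simp
      show "W d (c j) (c (j + d))" by (rule c_walk)
      show "tt + 1 \<le> card (S (tt * s0) (c (j + d)))" using growth[OF tm] by simp
    qed
    have m2': "\<exists>w<m. W (?T + (s0 - d)) (c j) w \<and> W (?T + (s0 - d)) (c i) w"
    proof (rule core[OF c_lt c_lt c_lt _ _ _ _ cY cX _ m2])
      show "s0 - d > 0" using d by simp
      have "j + (s0 - d) = i + s0" using d by simp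
      then show "W (s0 - d) (c j) (c i)" using c_walk[of "s0 - d" j] c_per[of i] by simp
      show "W (s0 - d) (c i) (c (i + (s0 - d)))" by (rule c_walk)
      show "tt + 1 \<le> card (S (tt * s0) (c (i + (s0 - d))))" using growth[OF tm] by simp
      show "?Y \<inter> ?X = {}" using True by blast
    qed
    show ?thesis
    proof (cases "d \<le> s0 div 2")
      case True
      then show ?thesis using m1 meet_ext[of _ "?T + d" "c i" "c j" KK] K by auto
    next
      case False
      then have "s0 - d \<le> s0 div 2" by simp
      then show ?thesis using m2' meet_ext[of _ "?T + (s0 - d)" "c i" "c j" KK] K by auto
    qed
  qed
qed

lemma AK_big:
  assumes m2: "m \<ge> 2"
  shows "\<forall>u<m. \<forall>v<m. \<exists>w<m. W (m - s0 + KK) u w \<and> W (m - s0 + KK) v w"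
proof (intro allI impI)
  fix u v assume u: "u < m" and v: "v < m"
  have sm: "s0 \<le> m" using s0_le .
  obtain \<alpha> where a: "W (m - s0) u (c \<alpha>)" using phase1[OF u sm] by blast
  obtain \<beta> where b: "W (m - s0) v (c \<beta>)" using phase1[OF v sm] by blast
  let ?a = "\<alpha> mod s0" and ?b = "\<beta> mod s0"
  have a': "W (m - s0) u (c ?a)" and b': "W (m - s0) v (c ?b)" using a b by (simp_all add: c_mod)
  have lt: "?a < s0" "?b < s0" using s0_pos by auto
  have comb: "\<exists>w<m. W (m - s0 + KK) u w \<and> W (m - s0 + KK) v w"
    if h: "W (m - s0) u x" "W (m - s0) v y" "x < m" "y < m" "\<exists>w<m. W KK x w \<and> W KK y w" for x y
  proof -
    obtain w where w: "w < m" "W KK x w" "W KK y w" using h(5) by blast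
    then show ?thesis using bpow_add[OF w(1), of N "m - s0" KK] h by blast
  qed
  consider "?a = ?b" | "?a < ?b" | "?b < ?a" by linarith
  then show "\<exists>w<m. W (m - s0 + KK) u w \<and> W (m - s0 + KK) v w"
  proof cases
    case 1
    then show ?thesis using meet_ext[OF c_lt a', of v "m - s0 + KK"] b' by simp
  next
    case 2
    then show ?thesis using comb[OF a' b' c_lt c_lt] meet_idx[OF 2 lt(2)] by blast
  next
    case 3
    then show ?thesis using comb[OF a' b' c_lt c_lt] meet_idx[OF 3 lt(1)] by blast
  qed
qed

end


lemma arith_bound:
  fixes m s :: nat
  assumes "m \<ge> 2" "1 \<le> s" "s \<le> m - 1"
  shows "m - s + ((m - 1) div 2) * s + (if odd m then 0 else s div 2) \<le> (m - 1)^2 div 2 + 1"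
proof (cases "odd m")
  case True
  then obtain q where q: "m = 2*q + 1" by (metis oddE)
  have sq: "(m - 1)^2 div 2 = 2*q*q" using q by (simp add: power2_eq_square)
  have t: "(m-1) div 2 = q" using q by simp
  have "q \<ge> 1" "s \<le> 2*q" using assms q by auto
  then have "int s * (int q - 1) \<le> (2 * int q) * (int q - 1)" by (intro mult_right_mono) auto
  then have "int (m - s + q * s) \<le> int (2*q*q + 1)"
    using q assms \<open>s \<le> 2*q\<close> by (simp add: of_nat_diff algebra_simps)
  then have "m - s + q * s \<le> 2*q*q + 1" by (simp only: of_nat_le_iff)
  then show ?thesis using True sq t by simp
next
  case False
  then obtain q0 where q0: "m = 2*q0" by (metis evenE)
  define q where "q = q0 - 1"
  have q: "m = 2*q + 2" using q0 assms by (simp add: q_def)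
  have sq: "(m - 1)^2 div 2 = 2*q*q + 2*q" using q by (simp add: power2_eq_square algebra_simps)
  have t: "(m-1) div 2 = q" using q by simp
  obtain h where h: "s = 2*h \<or> s = 2*h + 1" by (metis evenE oddE)
  then show ?thesis
  proof
    assume s: "s = 2*h"
    then have "h \<ge> 1" "h \<le> q" using assms q by auto
    then have "int h * (2*int q - 1) \<le> int q * (2 * int q - 1)" by (intro mult_right_mono) auto
    then have "int (m - s + q * s + s div 2) \<le> int (2*q*q + 2*q + 1)"
      using s q \<open>h \<le> q\<close> \<open>h \<ge> 1\<close> by (simp add: of_nat_diff algebra_simps)
    then have "m - s + q * s + s div 2 \<le> 2*q*q + 2*q + 1" by (simp only: of_nat_le_iff)
    then show ?thesis using False sq t by simp
  next
    assume s: "s = 2*h + 1"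
    then have "h \<le> q" using assms q by auto
    then have "int h * (2*int q - 1) \<le> int q * (2 * int q - 1)" by (cases "q = 0") (auto intro!: mult_right_mono)
    then have "int (m - s + q * s + s div 2) \<le> int (2*q*q + 2*q + 1)"
      using s q \<open>h \<le> q\<close> by (simp add: of_nat_diff algebra_simps)
    then have "m - s + q * s + s div 2 \<le> 2*q*q + 2*q + 1" by (simp only: of_nat_le_iff)
    then show ?thesis using False sq t by simp
  qed
qed

lemma AK:
  assumes "m \<ge> 1" "\<exists>r>0. \<forall>x<m. \<forall>y<m. bpow m N r x y"
  shows "\<exists>k>0. k \<le> (m - 1)^2 div 2 + 1 \<and> (\<forall>u<m. \<forall>v<m. \<exists>w<m. bpow m N k u w \<and> bpow m N k v w)"
proof -
  interpret prim m N using assms by unfold_locales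
  show ?thesis
  proof (cases "m = 1")
    case True
    obtain y where "y < m" "N 0 y" using row_nz True by auto
    then have "N 0 0" using True by simp
    then have "bpow m N 1 0 0" using bpow_one[of 0 m N] True by simp
    then show ?thesis using True by (intro exI[of _ 1]) auto
  next
    case False
    then have m2: "m \<ge> 2" using assms by simp
    have sl: "s0 < m" by (rule s0_lt[OF m2])
    have "m - s0 + KK \<le> (m - 1)^2 div 2 + 1"
    proof -
      have "s0 \<le> m - 1" "1 \<le> s0" using sl s0_pos by auto
      from arith_bound[OF m2 this(2) this(1)] show ?thesis
        unfolding KK_def tt_def by (simp add: add.assoc)
    qed
    moreover have "m - s0 + KK > 0" using sl by simp
    ultimately show ?thesis using AK_big[OF m2] by blast
  qed
qed



lemma drop_index:
  assumes l0: "l0 < b" and b2: "b \<ge> 2"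
    and useless: "\<forall>i<n. \<forall>j<n. \<not> (A i l0 \<and> B l0 j)"
  shows "\<forall>i<n. \<forall>j<n. bmult b A B i j =
           bmult (b - 1) (\<lambda>i l. A i (if l < l0 then l else Suc l)) (\<lambda>l j. B (if l < l0 then l else Suc l) j) i j"
proof (intro allI impI)
  fix i j assume i: "i < n" and j: "j < n"
  let ?f = "\<lambda>l::nat. if l < l0 then l else Suc l"
  show "bmult b A B i j = bmult (b - 1) (\<lambda>i l. A i (?f l)) (\<lambda>l j. B (?f l) j) i j"
  proof
    assume "bmult b A B i j"
    then obtain l where l: "l < b" "A i l" "B l j" by (auto simp: bmult_def)
    then have "l \<noteq> l0" using useless i j by blast
    show "bmult (b - 1) (\<lambda>i l. A i (?f l)) (\<lambda>l j. B (?f l) j) i j"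
    proof (cases "l < l0")
      case True
      then show ?thesis using l l0 by (auto simp: bmult_def intro!: exI[of _ l])
    next
      case False
      then have "?f (l - 1) = l" using \<open>l \<noteq> l0\<close> by auto
      moreover have "l - 1 < b - 1" using l False \<open>l \<noteq> l0\<close> by auto
      ultimately show ?thesis using l unfolding bmult_def by (intro exI[of _ "l - 1"]) auto
    qed
  next
    assume "bmult (b - 1) (\<lambda>i l. A i (?f l)) (\<lambda>l j. B (?f l) j) i j"
    then obtain l where l: "l < b - 1" "A i (?f l)" "B (?f l) j" by (auto simp: bmult_def)
    moreover have "?f l < b" using l l0 by auto
    ultimately show "bmult b A B i j" unfolding bmult_def by blast
  qed
qed

lemma bpow_mono_formula:
  assumes fac: "\<forall>i<n. \<forall>j<n. M i j = bmult b A B i j"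
  shows "i < n \<Longrightarrow> j < n \<Longrightarrow> bpow n M (Suc k) i j =
     (\<exists>l<b. \<exists>l'<b. A i l \<and> bpow b (bmult n B A) k l l' \<and> B l' j)"
proof (induction k arbitrary: j)
  case 0
  have "bpow n M 1 i j = M i j" using bpow_one[OF 0(1)] .
  then show ?case using fac 0 by (auto simp: bmult_def)
next
  case (Suc k)
  have "bpow n M (Suc (Suc k)) i j = bmult n (bpow n M (Suc k)) M i j"
    by (rule fun_cong[OF fun_cong[OF bpow.simps(2)]])
  also have "\<dots> = (\<exists>p<n. bpow n M (Suc k) i p \<and> M p j)"
    by (simp only: bmult_def)
  also have "\<dots> = (\<exists>p<n. (\<exists>l<b. \<exists>l'<b. A i l \<and> bpow b (bmult n B A) k l l' \<and> B l' p)
                            \<and> (\<exists>q<b. A p q \<and> B q j))"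
  proof -
    have h1: "\<forall>p<n. bpow n M (Suc k) i p = (\<exists>l<b. \<exists>l'<b. A i l \<and> bpow b (bmult n B A) k l l' \<and> B l' p)"
      using Suc.IH Suc.prems(1) by blast
    have h2: "\<forall>p<n. M p j = (\<exists>q<b. A p q \<and> B q j)" using fac Suc.prems by (simp add: bmult_def)
    show ?thesis using h1 h2 by (metis (no_types, lifting))
  qed
  also have "\<dots> = (\<exists>l<b. \<exists>q<b. A i l \<and> bmult b (bpow b (bmult n B A) k) (bmult n B A) l q \<and> B q j)"
    unfolding bmult_def by blast
  also have "\<dots> = (\<exists>l<b. \<exists>q<b. A i l \<and> bpow b (bmult n B A) (Suc k) l q \<and> B q j)"
    by (simp only: bpow.simps(2))
  finally show ?case .
qed

theorem theorem2p3:
  fixes n b :: nat and M :: "nat \<Rightarrow> nat \<Rightarrow> bool"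
  assumes "n \<ge> 2"
    and "primitive n M"
    and "boolean_rank n n M = b"
  shows "real (scrambling_index n M) \<le> real_of_int \<lceil>(real ((b - 1)^2) + 1) / 2\<rceil> + 1"
proof -
  note n2 = assms(1)
  obtain r where r: "r > 0" "\<forall>i<n. \<forall>j<n. bpow n M r i j"
    using assms(2) unfolding primitive_def by blast
  let ?P = "\<lambda>b. b > 0 \<and> (\<exists>A B. \<forall>i<n. \<forall>j<n. M i j = bmult b A B i j)"
  have Pn: "?P n"
  proof -
    have "\<forall>i<n. \<forall>j<n. M i j = bmult n M (\<lambda>l j. l = j) i j" by (auto simp: bmult_def)
    then show ?thesis using n2 by auto
  qed
  have bdef: "b = (LEAST b. ?P b)" using assms(3) unfolding boolean_rank_def by simp
  have Pb: "?P b" unfolding bdef by (rule LeastI[of ?P n]) (rule Pn)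
  have bmin: "\<And>b'. b' < b \<Longrightarrow> \<not> ?P b'" unfolding bdef by (rule not_less_Least)
  obtain A B where fac: "\<forall>i<n. \<forall>j<n. M i j = bmult b A B i j" using Pb by blast
  have bpos: "b > 0" using Pb by simp
  have Mnz: "\<exists>i<n. \<exists>j<n. M i j"
  proof -
    have "bpow n M (Suc (r - 1)) 0 0" using r n2 by simp
    then obtain l where "l < n" "M l 0" by (auto simp: bmult_def)
    then show ?thesis using n2 by (intro exI[of _ l] conjI exI[of _ 0]) auto
  qed
  have useful: "\<exists>i<n. \<exists>j<n. A i l0 \<and> B l0 j" if l0: "l0 < b" for l0
  proof (rule ccontr)
    assume u: "\<not> ?thesis"
    show False
    proof (cases "b \<ge> 2")
      case True
      have "?P (b - 1)"
        using drop_index[OF l0 True, of n A B] u fac True by auto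
      then show False using bmin[of "b - 1"] bpos by simp
    next
      case False
      then have "b = 1" using bpos by simp
      then have "l0 = 0" using l0 by simp
      then have "\<forall>i<n. \<forall>j<n. \<not> M i j" using fac u \<open>b = 1\<close> by (auto simp: bmult_def)
      then show False using Mnz by blast
    qed
  qed
  have rowB: "\<exists>j<n. B l j" if "l < b" for l using useful[OF that] by blast
  have colA: "\<exists>i<n. A i l" if "l < b" for l using useful[OF that] by blast
  define Nm where "Nm = bmult n B A"
  have F: "\<And>k i j. i < n \<Longrightarrow> j < n \<Longrightarrow> bpow n M (Suc k) i j =
     (\<exists>l<b. \<exists>l'<b. A i l \<and> bpow b Nm k l l' \<and> B l' j)"
    unfolding Nm_def by (rule bpow_mono_formula[OF fac])
  have Nprim: "\<forall>x<b. \<forall>y<b. bpow b Nm (Suc (Suc (r - 1))) x y"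
  proof (intro allI impI)
    fix x y assume x: "x < b" and y: "y < b"
    obtain i where i: "i < n" "B x i" using rowB[OF x] by blast
    obtain j where j: "j < n" "A j y" using colA[OF y] by blast
    have "bpow n M (Suc (r - 1)) i j" using r i j by simp
    then obtain p q where pq: "p < b" "q < b" "A i p" "bpow b Nm (r - 1) p q" "B q j"
      using F[OF i(1) j(1)] by blast
    have "Nm x p" using i pq unfolding Nm_def bmult_def by blast
    then have "bpow b Nm (1 + (r - 1)) x q" using bpow_add[OF pq(2)] pq bpow_one[OF x] by blast
    moreover have "Nm q y" using j pq unfolding Nm_def bmult_def by blast
    ultimately show "bpow b Nm (Suc (Suc (r - 1))) x y" using pq(2) by (auto simp: bmult_def)
  qed
  obtain k0 where k0: "k0 > 0" "k0 \<le> (b - 1)^2 div 2 + 1"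
    "\<forall>u<b. \<forall>v<b. \<exists>w<b. bpow b Nm k0 u w \<and> bpow b Nm k0 v w"
    using AK[of b Nm] bpos Nprim by (metis One_nat_def Suc_leI zero_less_Suc)
  have rowA: "\<exists>l<b. A i l" if "i < n" for i
  proof -
    have "bpow n M (Suc (r - 1)) i i" using r that by simp
    then show ?thesis using F[OF that that] by blast
  qed
  have scr: "k0 + 1 > 0 \<and> (\<forall>i<n. \<forall>j<n. \<exists>l<n. bpow n M (k0 + 1) i l \<and> bpow n M (k0 + 1) j l)"
  proof (intro conjI allI impI)
    fix i j assume i: "i < n" and j: "j < n"
    obtain l where l: "l < b" "A i l" using rowA[OF i] by blast
    obtain l' where l': "l' < b" "A j l'" using rowA[OF j] by blast
    obtain p where p: "p < b" "bpow b Nm k0 l p" "bpow b Nm k0 l' p" using k0(3) l l' by blast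
    obtain q where q: "q < n" "B p q" using rowB[OF p(1)] by blast
    have "bpow n M (Suc k0) i q" "bpow n M (Suc k0) j q"
      using F[OF i q(1)] F[OF j q(1)] l l' p q by blast+
    then show "\<exists>l<n. bpow n M (k0 + 1) i l \<and> bpow n M (k0 + 1) j l" using q by auto
  qed simp
  have "scrambling_index n M \<le> k0 + 1"
    unfolding scrambling_index_def by (rule Least_le) (rule scr)
  also have "\<dots> \<le> (b - 1)^2 div 2 + 2" using k0 by simp
  finally have si: "scrambling_index n M \<le> (b - 1)^2 div 2 + 2" .
  have ceil: "\<lceil>(real ((b - 1)^2) + 1) / 2\<rceil> = int ((b - 1)^2 div 2) + 1"
  proof -
    define y where "y = (b - 1)^2"
    have "\<lceil>(real y + 1) / 2\<rceil> = int (y div 2) + 1"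
    proof (rule ceiling_unique)
      have "y = 2 * (y div 2) + y mod 2" by simp
      moreover have "y mod 2 \<le> 1" by simp
      ultimately have "real y \<le> 2 * real (y div 2) + 1"
        by (metis of_nat_add of_nat_le_iff of_nat_mult of_nat_numeral add_left_mono of_nat_1)
      then show "(real y + 1) / 2 \<le> real_of_int (int (y div 2) + 1)" by simp
      have "2 * (y div 2) \<le> y" by simp
      then have "2 * real (y div 2) \<le> real y"
        by (metis of_nat_le_iff of_nat_mult of_nat_numeral)
      then show "real_of_int (int (y div 2) + 1) - 1 < (real y + 1) / 2" by simp
    qed
    then show ?thesis by (simp add: y_def)
  qed
  have "real (scrambling_index n M) \<le> real ((b - 1)^2 div 2 + 2)" using si by (simp only: of_nat_le_iff)
  then show ?thesis unfolding ceil by simp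
qed


end
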